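(* Under the full-support assumption and with $\eta L<\tfrac12$, for every $t\ge1$, \[ \langle\log\hat{\bm\pi}^{(t+1)}-\log{\bm\pi}^*,\eta\bm P\hat{\bm\pi}^{(t)}-\eta\bm P\hat{\bm\pi}^{(t+1)}\rangle\ge-\frac{(e^{2\eta L}-1)(e^{\eta L}+1)}{2\varepsilon}|\mathbb{A}|(\Theta_{t+1}+2e^{-1})\hat K^{(t+1)}. \]
   Context: $\mathbb{A}$ finite, $\Delta(\mathbb{A})$ the simplex, $\bm P$ skew-symmetric, $L=\max_{a,a'}|P_{a,a'}|$. $\mathbb{M}$: Nash equilibria, i.e. ${\bm\pi}\in\Delta(\mathbb{A})$ with $\max_a(\bm P{\bm\pi})_a\le0$. Full-support assumption: every $a$ has some ${\bm\pi}\in\mathbb{M}$ with $\pi_a>0$. $p({\bm\pi})=\arg\min_{{\bm\pi}'\in\mathbb{M}}D_{\mathrm{KL}}({\bm\pi}'\|{\bm\pi})$ for positive ${\bm\pi}$. OMWU with $\eta>0$: $\hat{\bm\pi}^{(1)}$ positive, ${\bm\pi}^{(0)}=\hat{\bm\pi}^{(1)}$, for $t\ge1$ $\pi^{(t)}_a\propto\hat\pi^{(t)}_a e^{\eta(\bm P{\bm\pi}^{(t-1)})_a}$, $\hat\pi^{(t+1)}_a\propto\hat\pi^{(t)}_a e^{\eta(\bm P{\bm\pi}^{(t)})_a}$ (normalized). ${\bm\pi}^*=p(\hat{\bm\pi}^{(1)})$, $\varepsilon=\min_a\pi^*_a$. $\Theta_t=D_{\mathrm{KL}}({\bm\pi}^*\|\hat{\bm\pi}^{(t)})+4\eta^2L^2D_{\mathrm{KL}}(\hat{\bm\pi}^{(t)}\|{\bm\pi}^{(t-1)})$.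 $\hat K^{(t+1)}=\max_a\hat\pi^{(t)}_a|\eta(\bm P{\bm\pi}^{(t)})_a|$. Logarithms are componentwise. *)

theory Defs
  imports Complex_Main
begin

definition simplex :: "('a::finite \<Rightarrow> real) set" where
  "simplex = {\<pi>. (\<forall>a. 0 \<le> \<pi> a) \<and> (\<Sum>a\<in>UNIV. \<pi> a) = 1}"

definition skew_symmetric :: "('a \<Rightarrow> 'a \<Rightarrow> real) \<Rightarrow> bool" where
  "skew_symmetric P \<longleftrightarrow> (\<forall>a b. P a b = - P b a)"

definition mat_vec :: "('a::finite \<Rightarrow> 'a \<Rightarrow> real) \<Rightarrow> ('a \<Rightarrow> real) \<Rightarrow> 'a \<Rightarrow> real" where
  "mat_vec P \<pi> a = (\<Sum>b\<in>UNIV. P a b * \<pi> b)"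

definition inner_prod :: "('a::finite \<Rightarrow> real) \<Rightarrow> ('a \<Rightarrow> real) \<Rightarrow> real" where
  "inner_prod x y = (\<Sum>a\<in>UNIV. x a * y a)"

definition maxabs :: "('a::finite \<Rightarrow> 'a \<Rightarrow> real) \<Rightarrow> real" where
  "maxabs P = Max {\<bar>P a b\<bar> | a b. True}"

definition nash :: "('a::finite \<Rightarrow> 'a \<Rightarrow> real) \<Rightarrow> ('a \<Rightarrow> real) set" where
  "nash P = {\<pi> \<in> simplex. \<forall>a. mat_vec P \<pi> a \<le> 0}"

definition KL :: "('a::finite \<Rightarrow> real) \<Rightarrow> ('a \<Rightarrow> real) \<Rightarrow> real" where
  "KL p q = (\<Sum>a\<in>UNIV. if p a = 0 then 0 else p a * ln (p a / q a))"

definition kl_proj :: "('a::finite \<Rightarrow> 'a \<Rightarrow> real) \<Rightarrow> ('a \<Rightarrow> real) \<Rightarrow> ('a \<Rightarrow> real)" where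
  "kl_proj P \<pi> = (SOME \<pi>'. \<pi>' \<in> nash P \<and> (\<forall>\<sigma>\<in>nash P. KL \<pi>' \<pi> \<le> KL \<sigma> \<pi>))"

definition mw_step :: "('a::finite \<Rightarrow> real) \<Rightarrow> ('a \<Rightarrow> real) \<Rightarrow> 'a \<Rightarrow> real" where
  "mw_step x g a = x a * exp (g a) / (\<Sum>b\<in>UNIV. x b * exp (g b))"

end

theory Submission
  imports Defs "HOL-Analysis.Function_Topology" "HOL-Analysis.Convex" "HOL-Real_Asymp.Real_Asymp"
begin


definition phi :: "real \<Rightarrow> real \<Rightarrow> real" where
  "phi q u = (if u = 0 then 0 else u * ln (u / q))"

lemma KL_phi: "KL p q = (\<Sum>a\<in>UNIV. phi (q a) (p a))"
  by (simp add: KL_def phi_def)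

lemma phi_cont: assumes "0 < q" shows "continuous_on {0..} (phi q)"
proof -
  have "continuous (at u within {0..}) (phi q)" if u: "u \<ge> 0" for u
  proof (cases "u = 0")
    case True
    have lim1: "((\<lambda>x::real. x * ln x - x * ln q) \<longlongrightarrow> 0) (at_right 0)"
      by real_asymp
    have "((phi q) \<longlongrightarrow> 0) (at_right 0)"
    proof (rule Lim_transform_eventually[OF lim1])
      show "\<forall>\<^sub>F x in at_right 0. x * ln x - x * ln q = phi q x"
        using eventually_at_right_less[of 0] 
        by eventually_elim (use assms in \<open>auto simp: phi_def ln_div algebra_simps\<close>)
    qed
    then show ?thesis using True
      by (simp add: continuous_within at_within_Ici_at_right phi_def)
  next
    case False
    then have up: "u > 0" using u by simp
    have "continuous (at u) (\<lambda>x. x * ln (x / q))"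
      using up assms by (intro continuous_intros) auto
    moreover have "\<forall>\<^sub>F x in nhds u. x * ln (x / q) = phi q x"
      using eventually_nhds_in_open[of "{0<..}" u] up
      by (auto elim!: eventually_mono simp: phi_def)
    ultimately have "continuous (at u) (phi q)"
      using isCont_cong by metis
    then show ?thesis using continuous_at_imp_continuous_at_within by blast
  qed
  then show ?thesis using continuous_on_eq_continuous_within by blast
qed

lemma simplex_le1: "x \<in> simplex \<Longrightarrow> x a \<le> 1"
proof -
  assume "x \<in> simplex"
  then have "\<forall>b. 0 \<le> x b" "sum x UNIV = 1" by (auto simp: simplex_def)
  then show "x a \<le> 1" using member_le_sum[of a UNIV x] by auto
qed

lemma nash_compact: "compact (nash P)"
proof -
  have "compactin (product_topology (\<lambda>_. euclidean) UNIV) (PiE UNIV (\<lambda>_::'a. {0..1::real}))"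
    unfolding compactin_PiE by simp
  then have K: "compact (PiE UNIV (\<lambda>_::'a. {0..1::real}))"
    unfolding euclidean_product_topology compactin_euclidean_iff .
  have c0: "continuous_on UNIV (\<lambda>x::'a\<Rightarrow>real. x a)" for a by (rule continuous_on_product_coordinates)
  have c1: "closed {x::'a\<Rightarrow>real. \<forall>a. 0 \<le> x a}"
  proof (intro closed_Collect_all allI)
    fix a
    show "closed {x::'a\<Rightarrow>real. 0 \<le> x a}" by (rule closed_Collect_le[OF continuous_on_const c0])
  qed
  have c2: "closed {x::'a\<Rightarrow>real. sum x UNIV = 1}"
  proof -
    have "continuous_on UNIV (\<lambda>x::'a\<Rightarrow>real. \<Sum>a\<in>UNIV. x a)" by (intro continuous_on_sum c0)
    then show ?thesis by (rule closed_Collect_eq[OF _ continuous_on_const])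
  qed
  have c3: "closed {x::'a\<Rightarrow>real. \<forall>a. mat_vec P x a \<le> 0}"
  proof (intro closed_Collect_all allI)
    fix a
    have "continuous_on UNIV (\<lambda>x::'a\<Rightarrow>real. \<Sum>b\<in>UNIV. P a b * x b)"
      by (intro continuous_on_sum continuous_on_mult_left c0)
    then show "closed {x::'a\<Rightarrow>real. mat_vec P x a \<le> 0}"
      unfolding mat_vec_def by (rule closed_Collect_le[OF _ continuous_on_const])
  qed
  have "{x::'a\<Rightarrow>real. (\<forall>a. 0 \<le> x a) \<and> sum x UNIV = 1 \<and> (\<forall>a. mat_vec P x a \<le> 0)} =
     {x. \<forall>a. 0 \<le> x a} \<inter> {x. sum x UNIV = 1} \<inter> {x. \<forall>a. mat_vec P x a \<le> 0}" by auto
  then have cl: "closed {x::'a\<Rightarrow>real. (\<forall>a. 0 \<le> x a) \<and> sum x UNIV = 1 \<and> (\<forall>a. mat_vec P x a \<le> 0)}"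
    using c1 c2 c3 by (simp only: closed_Int)
  have "nash P = PiE UNIV (\<lambda>_::'a. {0..1::real}) \<inter> {x::'a\<Rightarrow>real. (\<forall>a. 0 \<le> x a) \<and> sum x UNIV = 1 \<and> (\<forall>a. mat_vec P x a \<le> 0)}"
  proof (intro set_eqI iffI)
    fix x assume "x \<in> nash P"
    then have xs: "x \<in> simplex" and xm: "\<forall>a. mat_vec P x a \<le> 0" by (auto simp: nash_def)
    have "\<forall>a. x a \<le> 1" using simplex_le1[OF xs] by blast
    then show "x \<in> PiE UNIV (\<lambda>_::'a. {0..1::real}) \<inter> {x::'a\<Rightarrow>real. (\<forall>a. 0 \<le> x a) \<and> sum x UNIV = 1 \<and> (\<forall>a. mat_vec P x a \<le> 0)}"
      using xs xm by (auto simp: simplex_def)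
  next
    fix x assume "x \<in> PiE UNIV (\<lambda>_::'a. {0..1::real}) \<inter> {x::'a\<Rightarrow>real. (\<forall>a. 0 \<le> x a) \<and> sum x UNIV = 1 \<and> (\<forall>a. mat_vec P x a \<le> 0)}"
    then show "x \<in> nash P" by (auto simp: nash_def simplex_def)
  qed
  then show ?thesis using K cl by (simp add: compact_Int_closed)
qed

lemma kl_min_exists:
  fixes P :: "'a::finite \<Rightarrow> 'a \<Rightarrow> real"
  assumes "nash P \<noteq> {}" "\<forall>a. 0 < q a"
  shows "\<exists>\<pi>'. \<pi>' \<in> nash P \<and> (\<forall>\<sigma>\<in>nash P. KL \<pi>' q \<le> KL \<sigma> q)"
proof -
  have "continuous_on (nash P) (\<lambda>x. KL x q)"
    unfolding KL_phi
  proof (intro continuous_on_sum)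
    fix a
    show "continuous_on (nash P) (\<lambda>x. phi (q a) (x a))"
    proof (rule continuous_on_compose2[of "{0..}" "phi (q a)" "nash P" "\<lambda>x. x a"])
      show "continuous_on {0..} (phi (q a))" using assms(2) by (intro phi_cont) auto
      show "continuous_on (nash P) (\<lambda>x. x a)"
        by (rule continuous_on_subset[OF continuous_on_product_coordinates]) simp
      show "(\<lambda>x. x a) ` nash P \<subseteq> {0..}" by (auto simp: nash_def simplex_def)
    qed
  qed
  from continuous_attains_inf[OF nash_compact assms(1) this]
  obtain x where "x \<in> nash P" "\<forall>y\<in>nash P. KL x q \<le> KL y q" by blast
  then show ?thesis by blast
qed

lemma phi_tangent:
  assumes "0 \<le> u" "0 < w" "0 < q"
  shows "u - w \<le> phi q u - u * ln (w / q)"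
proof (cases "u = 0")
  case True then show ?thesis using assms by (simp add: phi_def)
next
  case False
  then have u: "0 < u" using assms by simp
  have "ln (w / u) \<le> w / u - 1" using u assms by (intro ln_le_minus_one) auto
  then have "u * ln (w / u) \<le> u * (w / u - 1)" using u by (intro mult_left_mono) auto
  also have "\<dots> = w - u" using u by (simp add: field_simps)
  finally have "u * ln (w / u) \<le> w - u" .
  moreover have "ln (u / q) = ln (w / q) - ln (w / u)" using u assms by (simp add: ln_div)
  then have "u * ln (u / q) = u * ln (w / q) - u * ln (w / u)" by (simp add: right_diff_distrib)
  ultimately show ?thesis using False by (simp add: phi_def)
qed

lemma phi_convex:
  assumes "0 \<le> u" "0 \<le> v" "0 < q" "0 \<le> t" "t \<le> 1"
  shows "phi q ((1-t)*u + t*v) \<le> (1-t) * phi q u + t * phi q v"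
proof (cases "(1-t)*u + t*v = 0")
  case True
  then have "t = 0 \<or> t = 1 \<or> (u = 0 \<and> v = 0)" using assms
    by (smt (verit) mult_nonneg_nonneg mult_pos_pos)
  then show ?thesis using True by (auto simp: phi_def)
next
  case False
  define w where "w = (1-t)*u + t*v"
  have w: "0 < w" using False assms unfolding w_def by (smt (verit) mult_nonneg_nonneg)
  have "(1-t) * (u - w) \<le> (1-t) * (phi q u - u * ln (w / q))"
    using phi_tangent[OF assms(1) w assms(3)] assms by (intro mult_left_mono) auto
  moreover have "t * (v - w) \<le> t * (phi q v - v * ln (w / q))"
    using phi_tangent[OF assms(2) w assms(3)] assms by (intro mult_left_mono) auto
  moreover have "phi q w = w * ln (w / q)" using w by (simp add: phi_def)
  ultimately show ?thesis unfolding w_def[symmetric]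
    by (simp add: w_def algebra_simps)
qed

lemma nash_convex:
  assumes "x \<in> nash P" "y \<in> nash P" "0 \<le> t" "t \<le> 1"
  shows "(\<lambda>b. (1-t) * x b + t * y b) \<in> nash P"
proof -
  have x: "\<forall>b. 0 \<le> x b" "sum x UNIV = 1" "\<forall>a. mat_vec P x a \<le> 0"
    and y: "\<forall>b. 0 \<le> y b" "sum y UNIV = 1" "\<forall>a. mat_vec P y a \<le> 0"
    using assms by (auto simp: nash_def simplex_def)
  have "(\<Sum>b\<in>UNIV. (1-t) * x b + t * y b) = (1-t) * sum x UNIV + t * sum y UNIV"
    by (simp add: sum.distrib sum_distrib_left)
  moreover have "mat_vec P (\<lambda>b. (1-t) * x b + t * y b) a = (1-t) * mat_vec P x a + t * mat_vec P y a" for a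
  proof -
    have "mat_vec P (\<lambda>b. (1-t) * x b + t * y b) a = (\<Sum>b\<in>UNIV. (1-t) * (P a b * x b) + t * (P a b * y b))"
      by (simp add: mat_vec_def algebra_simps)
    also have "\<dots> = (1-t) * mat_vec P x a + t * mat_vec P y a"
      by (simp add: mat_vec_def sum.distrib sum_distrib_left)
    finally show ?thesis .
  qed
  moreover have "(1-t) * mat_vec P x a + t * mat_vec P y a \<le> 0" for a
    using x(3) y(3) assms(3,4) by (smt (verit) mult_nonneg_nonpos)
  ultimately show ?thesis using x y assms(3,4) by (auto simp: nash_def simplex_def)
qed

lemma kl_min_pos:
  fixes P :: "'a::finite \<Rightarrow> 'a \<Rightarrow> real"
  assumes q: "\<forall>a. 0 < q a" and m: "m \<in> nash P" and mmin: "\<forall>\<sigma>\<in>nash P. KL m q \<le> KL \<sigma> q"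
    and s: "\<sigma> \<in> nash P" "0 < \<sigma> a"
  shows "0 < m a"
proof (rule ccontr)
  assume na: "\<not> 0 < m a"
  have m0: "\<forall>b. 0 \<le> m b" using m by (auto simp: nash_def simplex_def)
  have ma: "m a = 0" using na m0[rule_format, of a] by linarith
  have s0: "\<forall>b. 0 \<le> \<sigma> b" using s by (auto simp: nash_def simplex_def)
  define D where "D = KL m q - KL \<sigma> q"
  define t where "t = exp (- (\<bar>D\<bar> + 1) / \<sigma> a)"
  have t0: "0 < t" by (simp add: t_def)
  have t1: "t \<le> 1" unfolding t_def using s(2) by (simp add: divide_nonpos_pos)
  have lnt: "\<sigma> a * ln t = - (\<bar>D\<bar> + 1)" unfolding t_def using s(2) by simp
  define x where "x = (\<lambda>b. (1-t) * m b + t * \<sigma> b)"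
  have xn: "x \<in> nash P" unfolding x_def using nash_convex[OF m s(1)] t0 t1 by simp
  have pb: "phi (q b) (x b) \<le> (1-t) * phi (q b) (m b) + t * phi (q b) (\<sigma> b) + (if b = a then t * (\<sigma> a * ln t) else 0)" for b
  proof (cases "b = a")
    case True
    have "x a = t * \<sigma> a" using ma by (simp add: x_def)
    then have "phi (q a) (x a) = t * \<sigma> a * ln (t * (\<sigma> a / q a))"
      using t0 s(2) by (simp add: phi_def)
    also have "\<dots> = t * (\<sigma> a * ln t) + t * phi (q a) (\<sigma> a)"
    proof -
      have "ln (t * (\<sigma> a / q a)) = ln t + ln (\<sigma> a / q a)"
        using t0 s(2) q[rule_format, of a] by (intro ln_mult_pos) auto
      then show ?thesis using s(2) by (simp add: phi_def algebra_simps)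
    qed
    finally show ?thesis using True ma by (simp add: phi_def)
  next
    case False
    then show ?thesis using phi_convex[of "m b" "\<sigma> b" "q b" t] m0 s0 q t0 t1 by (simp add: x_def)
  qed
  have "KL x q \<le> (\<Sum>b\<in>UNIV. (1-t) * phi (q b) (m b) + t * phi (q b) (\<sigma> b) + (if b = a then t * (\<sigma> a * ln t) else 0))"
    unfolding KL_phi by (intro sum_mono pb)
  also have "\<dots> = (1-t) * KL m q + t * KL \<sigma> q + t * (\<sigma> a * ln t)"
    by (simp add: KL_phi sum.distrib sum_distrib_left)
  finally have "KL m q \<le> (1-t) * KL m q + t * KL \<sigma> q + t * (\<sigma> a * ln t)"
    using mmin xn by fastforce
  then have "t * D \<le> t * (\<sigma> a * ln t)" by (simp add: D_def algebra_simps)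
  then have "D \<le> \<sigma> a * ln t" using t0 by simp
  then show False using lnt by linarith
qed



lemma mw_pos: assumes "\<forall>a. 0 < x a" shows "\<forall>a. 0 < mw_step x g a" "sum (mw_step x g) UNIV = 1"
proof -
  have Z: "0 < (\<Sum>b\<in>UNIV. x b * exp (g b))" using assms
    by (intro sum_pos) auto
  show "\<forall>a. 0 < mw_step x g a" using assms Z by (simp add: mw_step_def)
  show "sum (mw_step x g) UNIV = 1" using Z unfolding mw_step_def
    by (simp add: sum_divide_distrib[symmetric])
qed

lemma KL_nonneg:
  assumes "\<forall>a. 0 \<le> p a" "sum p UNIV = 1" "\<forall>a. 0 < q a" "sum q UNIV = 1"
  shows "0 \<le> KL p q"
proof -
  have "p a - q a \<le> phi (q a) (p a)" for a
    using phi_tangent[of "p a" "q a" "q a"] assms(1) assms(3)[rule_format, of a] by simp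
  then have "(\<Sum>a\<in>UNIV. p a - q a) \<le> KL p q" unfolding KL_phi by (intro sum_mono)
  then show ?thesis using assms by (simp add: sum_subtractf)
qed

lemma maxabs_ge: "\<bar>P a b\<bar> \<le> maxabs (P :: 'a::finite \<Rightarrow> 'a \<Rightarrow> real)"
proof -
  have "{\<bar>P a b\<bar> | a b. True} = (\<lambda>(a,b). \<bar>P a b\<bar>) ` UNIV" by auto
  then have "finite {\<bar>P a b\<bar> | a b. True}" by simp
  then show ?thesis unfolding maxabs_def by (intro Max_ge) auto
qed

lemma mat_vec_bound:
  fixes P :: "'a::finite \<Rightarrow> 'a \<Rightarrow> real"
  assumes "\<forall>a. 0 \<le> x a" "sum x UNIV = 1"
  shows "\<bar>mat_vec P x a\<bar> \<le> maxabs P"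
proof -
  have "\<bar>mat_vec P x a\<bar> \<le> (\<Sum>b\<in>UNIV. \<bar>P a b * x b\<bar>)" unfolding mat_vec_def by (rule sum_abs)
  also have "\<dots> \<le> (\<Sum>b\<in>UNIV. maxabs P * x b)"
    using assms maxabs_ge[of P a] by (intro sum_mono) (simp add: abs_mult mult_right_mono)
  also have "\<dots> = maxabs P" using assms by (simp add: sum_distrib_left[symmetric])
  finally show ?thesis .
qed

lemma exp_chord:
  fixes x g :: real
  assumes "0 \<le> x" "\<bar>g\<bar> \<le> x"
  shows "x * \<bar>exp g - 1\<bar> \<le> (exp x - 1) * \<bar>g\<bar>"
proof (cases "x = 0")
  case True then show ?thesis using assms by simp
next
  case False
  then have x: "0 < x" using assms by simp
  have ex: "x \<le> exp x - 1" using exp_ge_add_one_self[of x] by linarith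
  show ?thesis
  proof (cases "0 \<le> g")
    case True
    define s where "s = g / x"
    have s: "0 \<le> s" "s \<le> 1" using True assms x by (auto simp: s_def)
    have "exp ((1 - s) *\<^sub>R 0 + s *\<^sub>R x) \<le> (1 - s) * exp 0 + s * exp x"
      using s by (intro convex_onD[OF exp_convex]) auto
    moreover have "s * x = g" using x by (simp add: s_def)
    ultimately have "exp g - 1 \<le> s * (exp x - 1)" by (simp add: algebra_simps)
    then have "x * (exp g - 1) \<le> x * (s * (exp x - 1))" using x by (intro mult_left_mono) auto
    also have "\<dots> = (exp x - 1) * g" using x by (simp add: s_def)
    finally show ?thesis using True by simp
  next
    case False
    have "1 - exp g \<le> - g" using exp_ge_add_one_self[of g] by linarith
    moreover have "exp g \<le> 1" using False by simp
    ultimately have "x * \<bar>exp g - 1\<bar> \<le> x * (-g)" using x by (intro mult_left_mono) auto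
    also have "\<dots> \<le> (exp x - 1) * (-g)" using False ex by (intro mult_right_mono) auto
    finally show ?thesis using False by simp
  qed
qed

lemma ln_le_exp: fixes y :: real assumes "0 < y" shows "ln y \<le> y * exp (-1)"
proof -
  have "ln (y * exp (-1)) \<le> y * exp (-1) - 1" using assms by (intro ln_le_minus_one) auto
  then show ?thesis using assms by (simp add: ln_mult)
qed

lemma xlnx: fixes X :: real assumes "0 < X" shows "- X * ln X \<le> exp (-1)"
proof -
  have "ln (1/X) \<le> (1/X) * exp (-1)" using assms by (intro ln_le_exp) auto
  then have "X * ln (1/X) \<le> X * ((1/X) * exp (-1))" using assms by (intro mult_left_mono) auto
  then show ?thesis using assms by (simp add: ln_div)
qed



lemma log_lemma:
  fixes m p :: "'a::finite \<Rightarrow> real"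
  assumes m: "\<forall>a. 0 < m a" and p: "\<forall>a. 0 < p a" "sum p UNIV = 1"
    and e: "0 < \<epsilon>" "\<forall>a. \<epsilon> \<le> m a"
  shows "\<epsilon> * (\<Sum>a\<in>UNIV. \<bar>ln (p a) - ln (m a)\<bar>) \<le> KL m p + 2 * exp (-1)"
proof -
  define S where "S = {a. m a < p a}"
  define N where "N = (\<Sum>a\<in>UNIV. if a \<in> S then m a * (ln (p a) - ln (m a)) else 0)"
  have KLe: "KL m p = (\<Sum>a\<in>UNIV. m a * (ln (m a) - ln (p a)))"
    unfolding KL_def
  proof (intro sum.cong refl)
    fix a
    have "0 < m a" "0 < p a" using m p by auto
    then show "(if m a = 0 then 0 else m a * ln (m a / p a)) = m a * (ln (m a) - ln (p a))"
      by (simp add: ln_divide_pos)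
  qed
  have pt: "\<epsilon> * \<bar>ln (p a) - ln (m a)\<bar> \<le> m a * (ln (m a) - ln (p a)) + 2 * (if a \<in> S then m a * (ln (p a) - ln (m a)) else 0)" for a
  proof -
    have "\<epsilon> * \<bar>ln (p a) - ln (m a)\<bar> \<le> m a * \<bar>ln (p a) - ln (m a)\<bar>"
      using e by (intro mult_right_mono) auto
    also have "\<dots> = m a * (ln (m a) - ln (p a)) + 2 * (if a \<in> S then m a * (ln (p a) - ln (m a)) else 0)"
    proof (cases "a \<in> S")
      case True
      then have "ln (m a) < ln (p a)" using m p by (simp add: S_def)
      then show ?thesis using True by (simp add: algebra_simps)
    next
      case False
      then have "ln (p a) \<le> ln (m a)" using m p by (simp add: S_def)
      then show ?thesis using False by (simp add: algebra_simps)
    qed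
    finally show ?thesis .
  qed
  have "\<epsilon> * (\<Sum>a\<in>UNIV. \<bar>ln (p a) - ln (m a)\<bar>) = (\<Sum>a\<in>UNIV. \<epsilon> * \<bar>ln (p a) - ln (m a)\<bar>)"
    by (simp add: sum_distrib_left)
  also have "\<dots> \<le> (\<Sum>a\<in>UNIV. m a * (ln (m a) - ln (p a)) + 2 * (if a \<in> S then m a * (ln (p a) - ln (m a)) else 0))"
    by (intro sum_mono pt)
  also have "\<dots> = KL m p + 2 * N" unfolding KLe N_def by (simp add: sum.distrib sum_distrib_left)
  finally have main: "\<epsilon> * (\<Sum>a\<in>UNIV. \<bar>ln (p a) - ln (m a)\<bar>) \<le> KL m p + 2 * N" .
  have N_S: "N = (\<Sum>a\<in>S. m a * (ln (p a) - ln (m a)))"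
    unfolding N_def by (simp add: sum.inter_filter[symmetric] S_def)
  have "N \<le> exp (-1)"
  proof (cases "S = {}")
    case True then show ?thesis by (simp add: N_S)
  next
    case False
    define X where "X = sum m S"
    have X: "0 < X" unfolding X_def using False m by (intro sum_pos) auto
    have ptS: "m a * (ln (p a) - ln (m a)) \<le> X * p a - m a - m a * ln X" for a
    proof -
      have "ln (X * p a / m a) \<le> X * p a / m a - 1" using X m p by (intro ln_le_minus_one) auto
      moreover have "ln (X * p a / m a) = ln X + ln (p a) - ln (m a)"
      proof -
        have "0 < m a" "0 < p a" using m p by auto
        then show ?thesis using X by (simp add: ln_divide_pos ln_mult_pos)
      qed
      ultimately have "m a * (ln X + ln (p a) - ln (m a)) \<le> m a * (X * p a / m a - 1)"
        using m by (intro mult_left_mono) (auto simp: less_imp_le)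
      then show ?thesis using m[rule_format, of a] by (simp add: algebra_simps)
    qed
    have "N \<le> (\<Sum>a\<in>S. X * p a - m a - m a * ln X)" unfolding N_S by (intro sum_mono ptS)
    also have "\<dots> = X * sum p S - X - X * ln X"
      by (simp add: X_def sum_subtractf sum_distrib_left sum_distrib_right)
    also have "\<dots> \<le> X * 1 - X - X * ln X"
    proof -
      have "sum p S \<le> sum p UNIV" using p by (intro sum_mono2) (auto simp: less_imp_le)
      then show ?thesis using X p by (simp add: mult_left_mono)
    qed
    also have "\<dots> \<le> exp (-1)" using xlnx[OF X] by simp
    finally show ?thesis .
  qed
  then show ?thesis using main by simp
qed



lemma V_lemma:
  fixes q g :: "'a::finite \<Rightarrow> real"
  assumes q: "\<forall>a. 0 < q a" "sum q UNIV = 1" and x: "0 \<le> x" and g: "\<forall>b. \<bar>g b\<bar> \<le> x"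
  shows "x * (\<Sum>b\<in>UNIV. \<bar>q b - mw_step q g b\<bar>) \<le> 2 * exp x * (exp x - 1) * (\<Sum>b\<in>UNIV. q b * \<bar>g b\<bar>)"
proof -
  define Z where "Z = (\<Sum>b\<in>UNIV. q b * exp (g b))"
  define E where "E = (\<Sum>b\<in>UNIV. q b * \<bar>exp (g b) - 1\<bar>)"
  have gl: "- x \<le> g b" for b using g[rule_format, of b] by linarith
  have "(\<Sum>b\<in>UNIV. q b * exp (- x)) \<le> Z" unfolding Z_def
    using q gl by (intro sum_mono mult_left_mono) (auto simp: abs_le_iff less_imp_le)
  then have Zge: "exp (- x) \<le> Z" using q by (simp add: sum_distrib_right[symmetric])
  have Z0: "0 < Z" using Zge exp_gt_zero[of "- x"] by linarith
  have Zinv: "1 / Z \<le> exp x"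
  proof -
    have "1 / Z \<le> 1 / exp (- x)" using Zge Z0 by (intro divide_left_mono) auto
    moreover have "1 / exp (- x) = exp x" by (simp add: exp_minus divide_inverse)
    ultimately show ?thesis by simp
  qed
  have "Z - 1 = (\<Sum>b\<in>UNIV. q b * (exp (g b) - 1))"
    unfolding Z_def using q by (simp add: algebra_simps sum_subtractf)
  then have "\<bar>Z - 1\<bar> \<le> (\<Sum>b\<in>UNIV. \<bar>q b * (exp (g b) - 1)\<bar>)" by (simp only: sum_abs)
  also have "\<dots> = E" unfolding E_def using q(1) by (intro sum.cong refl) (simp add: abs_mult less_imp_le)
  finally have Z1: "\<bar>Z - 1\<bar> \<le> E" .
  have pb: "\<bar>q b - mw_step q g b\<bar> \<le> q b * (\<bar>Z - 1\<bar> + \<bar>exp (g b) - 1\<bar>) / Z" for b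
  proof -
    have "q b - mw_step q g b = q b * (Z - exp (g b)) / Z"
      using Z0 by (simp add: mw_step_def Z_def[symmetric] field_simps)
    then have "\<bar>q b - mw_step q g b\<bar> = q b * \<bar>Z - exp (g b)\<bar> / Z"
      using Z0 q by (simp add: abs_mult abs_divide less_imp_le)
    also have "\<dots> \<le> q b * (\<bar>Z - 1\<bar> + \<bar>exp (g b) - 1\<bar>) / Z"
      using Z0 q by (intro divide_right_mono mult_left_mono) (auto simp: less_imp_le)
    finally show ?thesis .
  qed
  have "(\<Sum>b\<in>UNIV. \<bar>q b - mw_step q g b\<bar>) \<le> (\<Sum>b\<in>UNIV. q b * (\<bar>Z - 1\<bar> + \<bar>exp (g b) - 1\<bar>) / Z)"
    by (intro sum_mono pb)
  also have "\<dots> = (\<bar>Z - 1\<bar> * sum q UNIV + E) / Z"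
    unfolding E_def by (simp add: sum_divide_distrib[symmetric] sum.distrib sum_distrib_right algebra_simps)
  also have "\<dots> \<le> 2 * E * (1 / Z)" using Z1 q Z0 by (simp add: divide_right_mono)
  also have "\<dots> \<le> 2 * E * exp x"
    using Zinv by (intro mult_left_mono) (auto simp: E_def q less_imp_le intro!: sum_nonneg mult_nonneg_nonneg)
  finally have S: "(\<Sum>b\<in>UNIV. \<bar>q b - mw_step q g b\<bar>) \<le> 2 * E * exp x" .
  have "x * E = (\<Sum>b\<in>UNIV. q b * (x * \<bar>exp (g b) - 1\<bar>))"
    unfolding E_def by (simp add: sum_distrib_left algebra_simps)
  also have "\<dots> \<le> (\<Sum>b\<in>UNIV. q b * ((exp x - 1) * \<bar>g b\<bar>))"
    using q g x by (intro sum_mono mult_left_mono exp_chord) (auto simp: less_imp_le)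
  also have "\<dots> = (exp x - 1) * (\<Sum>b\<in>UNIV. q b * \<bar>g b\<bar>)"
    by (simp add: sum_distrib_left algebra_simps)
  finally have xE: "x * E \<le> (exp x - 1) * (\<Sum>b\<in>UNIV. q b * \<bar>g b\<bar>)" .
  have "x * (\<Sum>b\<in>UNIV. \<bar>q b - mw_step q g b\<bar>) \<le> x * (2 * E * exp x)"
    using S x by (intro mult_left_mono) auto
  also have "\<dots> = 2 * exp x * (x * E)" by simp
  also have "\<dots> \<le> 2 * exp x * ((exp x - 1) * (\<Sum>b\<in>UNIV. q b * \<bar>g b\<bar>))"
    using xE by (intro mult_left_mono) auto
  finally show ?thesis by simp
qed



theorem mainTheorem18:
  fixes P :: "'a::finite \<Rightarrow> 'a \<Rightarrow> real"
    and \<eta> :: real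
    and pihat pi :: "nat \<Rightarrow> 'a \<Rightarrow> real"
    and t :: nat
  assumes skew: "skew_symmetric P"
    and full_support: "\<forall>a. \<exists>\<pi>\<in>nash P. 0 < \<pi> a"
    and eta_pos: "0 < \<eta>"
    and eta_L: "\<eta> * maxabs P < 1/2"
    and init_simplex: "pihat 1 \<in> simplex"
    and init_pos: "\<forall>a. 0 < pihat 1 a"
    and pi0: "pi 0 = pihat 1"
    and pi_step: "\<forall>s\<ge>1. pi s = mw_step (pihat s) (\<lambda>a. \<eta> * mat_vec P (pi (s - 1)) a)"
    and pihat_step: "\<forall>s\<ge>1. pihat (s + 1) = mw_step (pihat s) (\<lambda>a. \<eta> * mat_vec P (pi s) a)"
    and t: "1 \<le> t"
  shows
    "let L = maxabs P;
         pistar = kl_proj P (pihat 1);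
         \<epsilon> = Min (range pistar);
         Theta = KL pistar (pihat (t + 1)) + 4 * \<eta>\<^sup>2 * L\<^sup>2 * KL (pihat (t + 1)) (pi t);
         Khat = Max (range (\<lambda>a. pihat t a * \<bar>\<eta> * mat_vec P (pi t) a\<bar>))
     in inner_prod (\<lambda>a. ln (pihat (t + 1) a) - ln (pistar a))
                   (\<lambda>a. \<eta> * mat_vec P (pihat t) a - \<eta> * mat_vec P (pihat (t + 1)) a)
        \<ge> - ((exp (2 * \<eta> * L) - 1) * (exp (\<eta> * L) + 1) / (2 * \<epsilon>))
            * real (card (UNIV :: 'a set)) * (Theta + 2 * exp (-1)) * Khat"
proof -
  define L where "L = maxabs P"
  define pistar where "pistar = kl_proj P (pihat 1)"
  define \<epsilon> where "\<epsilon> = Min (range pistar)"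
  define Theta where "Theta = KL pistar (pihat (t + 1)) + 4 * \<eta>\<^sup>2 * L\<^sup>2 * KL (pihat (t + 1)) (pi t)"
  define Khat where "Khat = Max (range (\<lambda>a. pihat t a * \<bar>\<eta> * mat_vec P (pi t) a\<bar>))"
  define n where "n = real (card (UNIV :: 'a set))"
  define x where "x = \<eta> * L"
  have L0: "0 \<le> L" unfolding L_def using maxabs_ge[of P] by (meson abs_ge_zero order_trans)
  have x0: "0 \<le> x" unfolding x_def using eta_pos L0 by simp
  have ph: "\<forall>a. 0 < pihat s a" "sum (pihat s) UNIV = 1" if "1 \<le> s" for s
    using that
  proof (induction s rule: nat_induct_at_least)
    case base
    show "\<forall>a. 0 < pihat 1 a" using init_pos .
    show "sum (pihat 1) UNIV = 1" using init_simplex by (simp add: simplex_def)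
  next
    case (Suc s)
    have e: "pihat (Suc s) = mw_step (pihat s) (\<lambda>a. \<eta> * mat_vec P (pi s) a)"
      using pihat_step Suc.hyps by simp
    show "\<forall>a. 0 < pihat (Suc s) a" "sum (pihat (Suc s)) UNIV = 1"
      unfolding e by (rule mw_pos(1)[OF Suc.IH(1)], rule mw_pos(2)[OF Suc.IH(1)])
  qed
  have pp: "\<forall>a. 0 < pi s a" "sum (pi s) UNIV = 1" if "1 \<le> s" for s
  proof -
    have e: "pi s = mw_step (pihat s) (\<lambda>a. \<eta> * mat_vec P (pi (s - 1)) a)"
      using pi_step that by simp
    show "\<forall>a. 0 < pi s a" "sum (pi s) UNIV = 1"
      unfolding e by (rule mw_pos(1)[OF ph(1)[OF that]], rule mw_pos(2)[OF ph(1)[OF that]])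
  qed
  define q where "q = pihat t"
  define p where "p = pihat (t + 1)"
  define r where "r = pi t"
  define g where "g = (\<lambda>a. \<eta> * mat_vec P r a)"
  have q: "\<forall>a. 0 < q a" "sum q UNIV = 1" unfolding q_def using ph t by auto
  have p: "\<forall>a. 0 < p a" "sum p UNIV = 1" unfolding p_def using ph t by auto
  have r: "\<forall>a. 0 < r a" "sum r UNIV = 1" unfolding r_def using pp t by auto
  have pe: "p = mw_step q g" unfolding p_def q_def g_def r_def using pihat_step t by simp
  have gb: "\<forall>b. \<bar>g b\<bar> \<le> x"
  proof
    fix b
    have "\<bar>mat_vec P r b\<bar> \<le> L" unfolding L_def using r by (intro mat_vec_bound) (auto simp: less_imp_le)
    then show "\<bar>g b\<bar> \<le> x" unfolding g_def x_def using eta_pos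
      by (simp add: abs_mult mult_left_mono)
  qed
  obtain a0 :: 'a where True by blast
  obtain \<pi>0 where "\<pi>0 \<in> nash P" using full_support by blast
  then have ne: "nash P \<noteq> {}" by auto
  have ex: "\<exists>\<pi>'. \<pi>' \<in> nash P \<and> (\<forall>\<sigma>\<in>nash P. KL \<pi>' (pihat 1) \<le> KL \<sigma> (pihat 1))"
    by (rule kl_min_exists[OF ne init_pos])
  have "pistar \<in> nash P \<and> (\<forall>\<sigma>\<in>nash P. KL pistar (pihat 1) \<le> KL \<sigma> (pihat 1))"
    unfolding pistar_def kl_proj_def by (rule someI_ex[OF ex])
  then have pim: "pistar \<in> nash P" "\<forall>\<sigma>\<in>nash P. KL pistar (pihat 1) \<le> KL \<sigma> (pihat 1)"
    by auto
  have pipos: "\<forall>a. 0 < pistar a"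
  proof
    fix a
    obtain \<sigma> where s: "\<sigma> \<in> nash P" "0 < \<sigma> a" using full_support by blast
    show "0 < pistar a" by (rule kl_min_pos[OF init_pos pim(1) pim(2) s])
  qed
  have pis: "\<forall>a. 0 \<le> pistar a" "sum pistar UNIV = 1" using pim(1) by (auto simp: nash_def simplex_def)
  have fin: "finite (range pistar)" by simp
  have eps: "0 < \<epsilon>" "\<forall>a. \<epsilon> \<le> pistar a"
  proof -
    have "\<epsilon> \<in> range pistar" unfolding \<epsilon>_def using fin by (intro Min_in) auto
    then show "0 < \<epsilon>" using pipos by auto
    show "\<forall>a. \<epsilon> \<le> pistar a" unfolding \<epsilon>_def using fin by auto
  qed
  define lg where "lg = (\<lambda>a. ln (p a) - ln (pistar a))"
  have lg: "\<epsilon> * (\<Sum>a\<in>UNIV. \<bar>lg a\<bar>) \<le> KL pistar p + 2 * exp (-1)"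
    unfolding lg_def using log_lemma[OF pipos p eps] .
  have KL1: "0 \<le> KL p r" using KL_nonneg[of p r] p r by (auto simp: less_imp_le)
  have KL2: "0 \<le> KL pistar p" using KL_nonneg[of pistar p] pis p by auto
  have Th: "KL pistar p \<le> Theta" unfolding Theta_def p_def[symmetric] r_def[symmetric]
    using KL1 by simp
  have Th0: "0 \<le> Theta + 2 * exp (-1)" using Th KL2 exp_gt_zero[of "-1"] by linarith
  have lsum: "(\<Sum>a\<in>UNIV. \<bar>lg a\<bar>) \<le> (Theta + 2 * exp (-1)) / \<epsilon>"
    using lg Th eps(1) by (simp add: field_simps)
  define B where "B = \<eta> * L * (\<Sum>b\<in>UNIV. \<bar>q b - p b\<bar>)"
  define v where "v = (\<lambda>a. \<eta> * mat_vec P q a - \<eta> * mat_vec P p a)"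
  have vb: "\<bar>v a\<bar> \<le> B" for a
  proof -
    have "v a = \<eta> * (\<Sum>b\<in>UNIV. P a b * (q b - p b))"
      unfolding v_def mat_vec_def by (simp add: algebra_simps sum_subtractf)
    then have "\<bar>v a\<bar> = \<eta> * \<bar>\<Sum>b\<in>UNIV. P a b * (q b - p b)\<bar>" using eta_pos by (simp add: abs_mult)
    also have "\<dots> \<le> \<eta> * (\<Sum>b\<in>UNIV. L * \<bar>q b - p b\<bar>)"
    proof (intro mult_left_mono)
      show "\<bar>\<Sum>b\<in>UNIV. P a b * (q b - p b)\<bar> \<le> (\<Sum>b\<in>UNIV. L * \<bar>q b - p b\<bar>)"
        proof -
        have "\<bar>\<Sum>b\<in>UNIV. P a b * (q b - p b)\<bar> \<le> (\<Sum>b\<in>UNIV. \<bar>P a b * (q b - p b)\<bar>)"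
          by (rule sum_abs)
        also have "\<dots> \<le> (\<Sum>b\<in>UNIV. L * \<bar>q b - p b\<bar>)"
        proof (intro sum_mono)
          fix b
          show "\<bar>P a b * (q b - p b)\<bar> \<le> L * \<bar>q b - p b\<bar>"
            unfolding abs_mult L_def by (intro mult_right_mono maxabs_ge) simp
        qed
        finally show ?thesis .
      qed
    qed (use eta_pos in auto)
    finally show ?thesis unfolding B_def by (simp add: sum_distrib_left mult.assoc)
  qed
  have sqg: "(\<Sum>b\<in>UNIV. q b * \<bar>g b\<bar>) \<le> n * Khat"
  proof -
    have "q b * \<bar>g b\<bar> \<le> Khat" for b
      unfolding Khat_def q_def g_def r_def by (intro Max_ge) auto
    then have "(\<Sum>b\<in>UNIV. q b * \<bar>g b\<bar>) \<le> (\<Sum>b\<in>(UNIV::'a set). Khat)" by (intro sum_mono)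
    then show ?thesis by (simp add: n_def)
  qed
  have K0: "0 \<le> Khat"
  proof -
    have "q a0 * \<bar>g a0\<bar> \<le> Khat" unfolding Khat_def q_def g_def r_def by (intro Max_ge) auto
    moreover have "0 \<le> q a0 * \<bar>g a0\<bar>" using q by (simp add: less_imp_le)
    ultimately show ?thesis by linarith
  qed
  have n0: "0 \<le> n" by (simp add: n_def)
  define C where "C = (exp (2 * \<eta> * L) - 1) * (exp (\<eta> * L) + 1) / 2"
  have Bb: "B \<le> C * n * Khat"
  proof -
    have "B = x * (\<Sum>b\<in>UNIV. \<bar>q b - mw_step q g b\<bar>)" unfolding B_def x_def pe by simp
    also have "\<dots> \<le> 2 * exp x * (exp x - 1) * (\<Sum>b\<in>UNIV. q b * \<bar>g b\<bar>)"
      by (rule V_lemma[OF q x0 gb])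
    also have "\<dots> \<le> 2 * exp x * (exp x - 1) * (n * Khat)"
      using sqg x0 by (intro mult_left_mono) auto
    also have "\<dots> \<le> C * (n * Khat)"
    proof (intro mult_right_mono)
      define y where "y = exp x"
      have y1: "1 \<le> y" unfolding y_def using x0 by simp
      have "C = (y * y - 1) * (y + 1) / 2"
        unfolding C_def y_def x_def by (simp add: exp_add[symmetric] mult.assoc)
      moreover have "(y * y - 1) * (y + 1) - 4 * (y * (y - 1)) = (y - 1) ^ 3"
        by (simp add: power3_eq_cube algebra_simps)
      moreover have "0 \<le> (y - 1) ^ 3" using y1 by simp
      ultimately have "4 * (y * (y - 1)) \<le> 2 * C" by linarith
      then show "2 * exp x * (exp x - 1) \<le> C" unfolding y_def[symmetric] by linarith
    qed (use n0 K0 in auto)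
    finally show ?thesis by (simp add: mult.assoc)
  qed
  have B0: "0 \<le> B" unfolding B_def using eta_pos L0 by (simp add: sum_nonneg)
  have "- (B * (\<Sum>a\<in>UNIV. \<bar>lg a\<bar>)) \<le> inner_prod lg v"
  proof -
    have "\<bar>inner_prod lg v\<bar> \<le> (\<Sum>a\<in>UNIV. \<bar>lg a * v a\<bar>)"
      unfolding Defs.inner_prod_def by (rule sum_abs)
    also have "\<dots> = (\<Sum>a\<in>UNIV. \<bar>lg a\<bar> * \<bar>v a\<bar>)" by (simp add: abs_mult)
    also have "\<dots> \<le> (\<Sum>a\<in>UNIV. \<bar>lg a\<bar> * B)" using vb by (intro sum_mono mult_left_mono) auto
    also have "\<dots> = B * (\<Sum>a\<in>UNIV. \<bar>lg a\<bar>)" by (simp add: sum_distrib_left mult.commute)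
    finally show ?thesis by linarith
  qed
  moreover have "B * (\<Sum>a\<in>UNIV. \<bar>lg a\<bar>) \<le> (C * n * Khat) * ((Theta + 2 * exp (-1)) / \<epsilon>)"
    using Bb lsum B0 by (intro mult_mono) (auto intro: sum_nonneg)
  moreover have "(C * n * Khat) * ((Theta + 2 * exp (-1)) / \<epsilon>) =
     ((exp (2 * \<eta> * L) - 1) * (exp (\<eta> * L) + 1) / (2 * \<epsilon>)) * n * (Theta + 2 * exp (-1)) * Khat"
    unfolding C_def by (simp add: field_simps)
  ultimately have fin: "- (((exp (2 * \<eta> * L) - 1) * (exp (\<eta> * L) + 1) / (2 * \<epsilon>)) * n * (Theta + 2 * exp (-1)) * Khat) \<le> inner_prod lg v"
    by linarith
  show ?thesis
    unfolding Let_def L_def[symmetric] pistar_def[symmetric] \<epsilon>_def[symmetric] Theta_def[symmetric]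
      Khat_def[symmetric] n_def[symmetric]
    using fin unfolding lg_def v_def p_def q_def by simp
qed


end
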